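(* Fix a distribution of $(X,Y)$ on $\mathcal{X}\times\{0,1\}$ with expectation $\mathbb{E}$, let $\mathcal{L}(F,y)=-[y\log\mu(F)+(1-y)\log(1-\mu(F))]$ be the log loss with $\mu(F)=1/(1+e^{-F})$, and let $\mathcal{H}$ be a set of group membership functions $h:\mathcal{X}\to\{0,1\}$. Let $F_T,F_{T+1}:\mathcal{X}\to\mathbb{R}$ be logit predictors, $f_T=\mu\circ F_T$, and let $\mathcal{W}$ be a class of weak learners $\phi:\mathcal{X}\times[0,1]\to\mathbb{R}$ such that for every $h\in\mathcal{H}$ and $g\in\mathcal{G}$ the function $(x,v)\mapsto h(x)g(v)$ belongs to $\mathcal{W}$. Define $\mathcal{L}^*_T=\inf\big\{\mathbb{E}[\mathcal{L}(F_T(X)+\sum_{k=1}^K w_k\phi_k(X,f_T(X)),Y)] : K\in\mathbb{N},\ w\in\mathbb{R}^K,\ \phi_1,\dots,\phi_K\in\mathcal{W}\big\}$, $\epsilon_T=\mathbb{E}[\mathcal{L}(F_{T+1}(X),Y)]-\mathcal{L}^*_T$, and $$C_T^2=\max_{h\in\mathcal{H},\,g\in\mathcal{G}}\frac{\mathbb{E}[g(f_T(X))\mid h(X)=1]}{\mathbb{E}[f_T(X)(1-f_T(X))\mid h(X)=1]}.$$ Then $f_T$ is $\alpha$-multicalibrated with respect to $\mathcal{H}$ for $$\alpha=\frac{2}{\sqrt3}\,C_T\sqrt{2\,\mathbb{E}[|F_{T+1}(X)-F_T(X)|]+\tfrac18\,\mathbb{E}[(F_{T+1}(X)-F_T(X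))^2]+\epsilon_T}.$$
   Context: $\mathcal{G}$ is the set of interval membership functions $g:[0,1]\to\{0,1\}$, $g(v)=\mathbb{1}_I(v)$ for an interval $I\subseteq[0,1]$. A probabilistic predictor $f$ is $\alpha$-multicalibrated with respect to $\mathcal{H}$ if $\big|\mathbb{E}[h(X)g(f(X))(Y-f(X))]\big|\le\alpha\sqrt{\mathbb{E}[h(X)f(X)(1-f(X))]}$ for all $h\in\mathcal{H}$, $g\in\mathcal{G}$. In the paper, $F_{T+1}$ is obtained from $F_T$ by gradient boosting with weak learners in $\mathcal{W}$ (regression trees on the features augmented with $f_T(x)$), and $\mathcal{L}^*_T$ is the loss of the optimal combination of weak learners added to $F_T$. *)

theory Defs
  imports "HOL-Probability.Probability"
begin

definition sigmoid :: "real \<Rightarrow> real" where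
  "sigmoid F = 1 / (1 + exp (- F))"

definition logloss :: "real \<Rightarrow> real \<Rightarrow> real" where
  "logloss F y = - (y * ln (sigmoid F) + (1 - y) * ln (1 - sigmoid F))"

definition interval_fns :: "(real \<Rightarrow> real) set" where
  "interval_fns = {g. \<exists>I. I \<subseteq> {0..1} \<and> is_interval I \<and> g = indicator I}"

definition multicalibrated ::
  "'w measure \<Rightarrow> ('w \<Rightarrow> 'a) \<Rightarrow> ('w \<Rightarrow> real) \<Rightarrow> ('a \<Rightarrow> real) set \<Rightarrow> ('a \<Rightarrow> real) \<Rightarrow> real \<Rightarrow> bool" where
  "multicalibrated M X Y H f \<alpha> \<longleftrightarrow>
     (\<forall>h\<in>H. \<forall>g\<in>interval_fns.
        \<bar>\<integral>\<omega>. h (X \<omega>) * g (f (X \<omega>)) * (Y \<omega> - f (X \<omega>)) \<partial>M\<bar>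
          \<le> \<alpha> * sqrt (\<integral>\<omega>. h (X \<omega>) * f (X \<omega>) * (1 - f (X \<omega>)) \<partial>M))"

text \<open>Expected log loss (the loss is nonnegative, so use the nonnegative integral).\<close>
definition exp_loss :: "'w measure \<Rightarrow> ('w \<Rightarrow> real) \<Rightarrow> ('w \<Rightarrow> real) \<Rightarrow> ennreal" where
  "exp_loss M G Y = (\<integral>\<^sup>+\<omega>. ennreal (logloss (G \<omega>) (Y \<omega>)) \<partial>M)"

definition opt_loss ::
  "'w measure \<Rightarrow> ('w \<Rightarrow> 'a) \<Rightarrow> ('w \<Rightarrow> real) \<Rightarrow> ('a \<Rightarrow> real) \<Rightarrow> ('a \<Rightarrow> real \<Rightarrow> real) set \<Rightarrow> ennreal" where
  "opt_loss M X Y F W =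
     Inf {exp_loss M (\<lambda>\<omega>. F (X \<omega>) + (\<Sum>k<K. w k * \<phi> k (X \<omega>) (sigmoid (F (X \<omega>))))) Y
          | (K::nat) (w::nat \<Rightarrow> real) \<phi>. \<forall>k<K. \<phi> k \<in> W}"

definition cond_exp_event :: "'w measure \<Rightarrow> ('w \<Rightarrow> real) \<Rightarrow> 'w set \<Rightarrow> real" where
  "cond_exp_event M A E = (\<integral>\<omega>. A \<omega> * indicator E \<omega> \<partial>M) / measure M E"

definition CT_ratios ::
  "'w measure \<Rightarrow> ('w \<Rightarrow> 'a) \<Rightarrow> ('a \<Rightarrow> real) set \<Rightarrow> ('a \<Rightarrow> real) \<Rightarrow> real set" where
  "CT_ratios M X H f =
     {cond_exp_event M (\<lambda>\<omega>. g (f (X \<omega>))) {\<omega>\<in>space M. h (X \<omega>) = 1}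
      / cond_exp_event M (\<lambda>\<omega>. f (X \<omega>) * (1 - f (X \<omega>))) {\<omega>\<in>space M. h (X \<omega>) = 1}
      | h g. h \<in> H \<and> g \<in> interval_fns}"

end

theory Submission
  imports Defs
begin

lemma sigmoid_pos: "0 < sigmoid F" "sigmoid F < 1"
  unfolding sigmoid_def by (auto simp: field_simps add_pos_pos)

lemma logloss1: "logloss F 1 = ln (1 + exp (- F))"
  unfolding logloss_def sigmoid_def by (simp add: ln_div add_pos_pos)

lemma logloss0: "logloss F 0 = ln (1 + exp F)"
proof -
  have p: "0 < 1 + exp F" "0 < 1 + exp (-F)" by (auto intro: add_pos_pos)
  have "1 - 1 / (1 + exp (- F)) = 1 / (1 + exp F)"
    using p by (simp add: field_simps exp_minus)
  then show ?thesis unfolding logloss_def sigmoid_def by (simp add: ln_div add_pos_pos)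
qed

lemma lnexp_lip: "\<bar>ln (1 + exp (a::real)) - ln (1 + exp b)\<bar> \<le> \<bar>a - b\<bar>"
proof -
  have *: "ln (1 + exp (a::real)) - ln (1 + exp b) \<le> a - b \<and> 0 \<le> ln (1 + exp (a::real)) - ln (1 + exp b)" if "b \<le> a" for a b :: real
  proof
    have "1 + exp a \<le> exp (a - b) * (1 + exp b)"
      using that by (simp add: distrib_left exp_diff)
    then have l: "ln (1 + exp a) \<le> ln (exp (a - b) * (1 + exp b))"
      by (simp add: add_pos_pos)
    have pb: "0 < 1 + exp b" by (simp add: add_pos_pos)
    have "ln (exp (a - b) * (1 + exp b)) = ln (exp (a - b)) + ln (1 + exp b)"
      using pb by (intro ln_mult_pos) auto
    also have "\<dots> = a - b + ln (1 + exp b)" by simp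
    finally have "ln (exp (a - b) * (1 + exp b)) = a - b + ln (1 + exp b)" .
    with l show "ln (1 + exp (a::real)) - ln (1 + exp b) \<le> a - b" by simp
    show "0 \<le> ln (1 + exp (a::real)) - ln (1 + exp b)" using that by (simp add: add_pos_pos)
  qed
  show ?thesis
  proof (cases "b \<le> a")
    case True then show ?thesis using *[OF True] by linarith
  next
    case False then show ?thesis using *[of a b] by linarith
  qed
qed

lemma logloss_lip: "y \<in> {0,1} \<Longrightarrow> \<bar>logloss a y - logloss b y\<bar> \<le> \<bar>a - b\<bar>"
  using lnexp_lip[of a b] lnexp_lip[of "-a" "-b"] by (auto simp: logloss0 logloss1)

lemma logloss_nonneg: "y \<in> {0,1} \<Longrightarrow> 0 \<le> logloss a y"
  by (auto simp: logloss0 logloss1 add_pos_pos)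

lemma hoeff: 
  fixes h p :: real assumes "0 \<le> p" "p \<le> 1"
  shows "ln (1 - p + p * exp h) \<le> h * p + h\<^sup>2 / 8"
proof (cases "h \<ge> 0")
  case True
  from Hoeffding.Hoeffdings_lemma_aux[OF True assms(1)] show ?thesis
    by (simp add: algebra_simps)
next
  case False
  define h' where "h' = - h"
  have "0 \<le> h'" using False by (simp add: h'_def)
  from Hoeffding.Hoeffdings_lemma_aux[OF this, of "1 - p"] assms
  have a: "ln (1 - (1 - p) + (1 - p) * exp h') \<le> h' * (1 - p) + h'\<^sup>2 / 8"
    by (simp add: algebra_simps)
  have "1 \<le> exp h'" using \<open>0 \<le> h'\<close> by simp
  then have "(1 - p) * 1 \<le> (1 - p) * exp h'" using assms by (intro mult_left_mono) auto
  have pos: "0 < 1 - (1 - p) + (1 - p) * exp h'"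
  proof (cases "p = 1")
    case False
    then have "0 < (1 - p) * exp h'" using assms by (intro mult_pos_pos) auto
    then show ?thesis using assms by simp
  qed simp
  have e: "exp h * exp h' = 1" by (simp add: h'_def flip: exp_add)
  have "exp h * (1 - (1 - p) + (1 - p) * exp h') = exp h * p + (1 - p) * (exp h * exp h')"
    by (simp add: algebra_simps)
  also have "\<dots> = 1 - p + p * exp h" using e by simp
  finally have "ln (1 - p + p * exp h) = ln (exp h * (1 - (1 - p) + (1 - p) * exp h'))" by simp
  also have "\<dots> = h + ln (1 - (1 - p) + (1 - p) * exp h')"
    using pos by (subst ln_mult_pos) auto
  finally have "ln (1 - p + p * exp h) = h + ln (1 - (1 - p) + (1 - p) * exp h')" .
  then show ?thesis using a by (simp add: h'_def algebra_simps)
qed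

lemma ln_shift: "ln (1 + exp ((a::real) + h)) - ln (1 + exp a) = ln (1 - exp a / (1 + exp a) + exp a / (1 + exp a) * exp h)"
proof -
  have pa: "0 < 1 + exp a" "0 < 1 + exp (a + h)" by (auto intro: add_pos_pos)
  have "1 - exp a / (1 + exp a) + exp a / (1 + exp a) * exp h = (1 + exp (a + h)) / (1 + exp a)"
    using pa by (simp add: field_simps exp_add)
  then show ?thesis using pa by (simp add: ln_div)
qed

lemma logloss_quad:
  assumes "y \<in> {0, 1}"
  shows "logloss (F + t) y \<le> logloss F y - t * (y - sigmoid F) + t\<^sup>2 / 8"
proof -
  have sq: "sigmoid F = exp F / (1 + exp F)"
    unfolding sigmoid_def by (simp add: exp_minus field_simps add_pos_pos)
  have nz: "1 + exp (-F) \<noteq> 0" by (metis add_pos_pos exp_gt_zero less_irrefl zero_less_one)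
  have sq1: "1 - sigmoid F = exp (-F) / (1 + exp (-F))"
    unfolding sigmoid_def using nz by (simp add: divide_simps)
  have s01: "0 \<le> sigmoid F" "sigmoid F \<le> 1" using sigmoid_pos[of F] by auto
  show ?thesis
  proof (cases "y = 0")
    case True
    have "logloss (F + t) y - logloss F y = ln (1 - sigmoid F + sigmoid F * exp t)"
      using True ln_shift[of F t] by (simp add: logloss0 sq)
    also have "\<dots> \<le> t * sigmoid F + t\<^sup>2 / 8" using hoeff[OF s01] by simp
    finally show ?thesis using True by simp
  next
    case False
    then have y: "y = 1" using assms by auto
    have "logloss (F + t) y - logloss F y = ln (1 - (1 - sigmoid F) + (1 - sigmoid F) * exp (- t))"
      using y ln_shift[of "-F" "-t"] by (simp add: logloss1 sq1 del: diff_diff_eq2)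
    also have "\<dots> \<le> (- t) * (1 - sigmoid F) + (- t)\<^sup>2 / 8" using hoeff[of "1 - sigmoid F" "-t"] s01 by simp
    finally show ?thesis using y by (simp add: algebra_simps)
  qed
qed

lemma sigmoid_borel[measurable (raw)]: "f \<in> borel_measurable M \<Longrightarrow> (\<lambda>x. sigmoid (f x)) \<in> borel_measurable M"
  unfolding sigmoid_def by measurable

lemma logloss_borel[measurable (raw)]:
  assumes [measurable]: "f \<in> borel_measurable M" "g \<in> borel_measurable M"
  shows "(\<lambda>x. logloss (f x) (g x)) \<in> borel_measurable M"
  unfolding logloss_def by measurable

theorem propositionA3:
  fixes M :: "'w measure" and N :: "'a measure"
    and X :: "'w \<Rightarrow> 'a" and Y :: "'w \<Rightarrow> real"
    and H :: "('a \<Rightarrow> real) set"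
    and FT FT1 :: "'a \<Rightarrow> real"
    and W :: "('a \<Rightarrow> real \<Rightarrow> real) set"
  assumes M: "prob_space M"
    and X: "X \<in> M \<rightarrow>\<^sub>M N"
    and Y: "Y \<in> borel_measurable M" "\<forall>\<omega>\<in>space M. Y \<omega> \<in> {0, 1}"
    and H: "\<forall>h\<in>H. h \<in> borel_measurable N \<and> (\<forall>x. h x \<in> {0, 1})"
    and F: "FT \<in> borel_measurable N" "FT1 \<in> borel_measurable N"
    and W: "\<forall>h\<in>H. \<forall>g\<in>interval_fns. (\<lambda>x v. h x * g v) \<in> W"
    and finL: "exp_loss M (\<lambda>\<omega>. FT (X \<omega>)) Y < \<infinity>" "exp_loss M (\<lambda>\<omega>. FT1 (X \<omega>)) Y < \<infinity>"
    and intD: "integrable M (\<lambda>\<omega>. FT1 (X \<omega>) - FT (X \<omega>))"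
      "integrable M (\<lambda>\<omega>. (FT1 (X \<omega>) - FT (X \<omega>))\<^sup>2)"
    and bdd: "bdd_above (CT_ratios M X H (sigmoid \<circ> FT))"
  shows "let fT = sigmoid \<circ> FT;
             CT = sqrt (Sup (CT_ratios M X H fT));
             \<epsilon>T = enn2real (exp_loss M (\<lambda>\<omega>. FT1 (X \<omega>)) Y) - enn2real (opt_loss M X Y FT W);
             \<alpha> = 2 / sqrt 3 * CT *
                 sqrt (2 * (\<integral>\<omega>. \<bar>FT1 (X \<omega>) - FT (X \<omega>)\<bar> \<partial>M)
                       + 1/8 * (\<integral>\<omega>. (FT1 (X \<omega>) - FT (X \<omega>))\<^sup>2 \<partial>M) + \<epsilon>T)
         in multicalibrated M X Y H fT \<alpha>"
proof -
  interpret P: prob_space M by (rule M)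
  note Xm[measurable] = X
  note Ym[measurable] = Y(1)
  note Fm[measurable] = F
  define D where "D = (\<integral>\<omega>. \<bar>FT1 (X \<omega>) - FT (X \<omega>)\<bar> \<partial>M)"
  define Q where "Q = (\<integral>\<omega>. (FT1 (X \<omega>) - FT (X \<omega>))\<^sup>2 \<partial>M)"
  define L0 where "L0 = enn2real (exp_loss M (\<lambda>\<omega>. FT (X \<omega>)) Y)"
  define L1 where "L1 = enn2real (exp_loss M (\<lambda>\<omega>. FT1 (X \<omega>)) Y)"
  define Ls where "Ls = enn2real (opt_loss M X Y FT W)"
  define S where "S = Sup (CT_ratios M X H (sigmoid \<circ> FT))"
  define A where "A = 2 * D + 1/8 * Q + (L1 - Ls)"
  have nn0: "0 \<le> logloss (FT (X \<omega>)) (Y \<omega>)" if "\<omega> \<in> space M" for \<omega>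
    using Y(2) that by (intro logloss_nonneg) auto
  have nn1: "0 \<le> logloss (FT1 (X \<omega>)) (Y \<omega>)" if "\<omega> \<in> space M" for \<omega>
    using Y(2) that by (intro logloss_nonneg) auto
  have int0: "integrable M (\<lambda>\<omega>. logloss (FT (X \<omega>)) (Y \<omega>))"
    by (rule integrableI_nonneg) (use finL(1) nn0 in \<open>auto simp: exp_loss_def intro: AE_I2\<close>)
  have int1: "integrable M (\<lambda>\<omega>. logloss (FT1 (X \<omega>)) (Y \<omega>))"
    by (rule integrableI_nonneg) (use finL(2) nn1 in \<open>auto simp: exp_loss_def intro: AE_I2\<close>)
  have "exp_loss M (\<lambda>\<omega>. FT (X \<omega>)) Y = ennreal (\<integral>\<omega>. logloss (FT (X \<omega>)) (Y \<omega>) \<partial>M)"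
    unfolding exp_loss_def by (rule nn_integral_eq_integral[OF int0]) (use nn0 in \<open>auto intro: AE_I2\<close>)
  then have L0eq: "L0 = (\<integral>\<omega>. logloss (FT (X \<omega>)) (Y \<omega>) \<partial>M)"
    unfolding L0_def using nn0 by (simp add: Bochner_Integration.integral_nonneg)
  have "exp_loss M (\<lambda>\<omega>. FT1 (X \<omega>)) Y = ennreal (\<integral>\<omega>. logloss (FT1 (X \<omega>)) (Y \<omega>) \<partial>M)"
    unfolding exp_loss_def by (rule nn_integral_eq_integral[OF int1]) (use nn1 in \<open>auto intro: AE_I2\<close>)
  then have L1eq: "L1 = (\<integral>\<omega>. logloss (FT1 (X \<omega>)) (Y \<omega>) \<partial>M)"
    unfolding L1_def using nn1 by (simp add: Bochner_Integration.integral_nonneg)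
  have "L0 - L1 = (\<integral>\<omega>. logloss (FT (X \<omega>)) (Y \<omega>) - logloss (FT1 (X \<omega>)) (Y \<omega>) \<partial>M)"
    unfolding L0eq L1eq by (rule Bochner_Integration.integral_diff[OF int0 int1, symmetric])
  also have "\<dots> \<le> D"
    unfolding D_def
  proof (rule integral_mono)
    show "integrable M (\<lambda>\<omega>. logloss (FT (X \<omega>)) (Y \<omega>) - logloss (FT1 (X \<omega>)) (Y \<omega>))"
      using int0 int1 by auto
    show "integrable M (\<lambda>\<omega>. \<bar>FT1 (X \<omega>) - FT (X \<omega>)\<bar>)" using intD(1) by auto
    fix \<omega> assume "\<omega> \<in> space M"
    then have "\<bar>logloss (FT (X \<omega>)) (Y \<omega>) - logloss (FT1 (X \<omega>)) (Y \<omega>)\<bar> \<le> \<bar>FT (X \<omega>) - FT1 (X \<omega>)\<bar>"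
      using Y(2) by (intro logloss_lip) auto
    then show "logloss (FT (X \<omega>)) (Y \<omega>) - logloss (FT1 (X \<omega>)) (Y \<omega>) \<le> \<bar>FT1 (X \<omega>) - FT (X \<omega>)\<bar>"
      by linarith
  qed
  finally have L01: "L0 - L1 \<le> D" .
  have D0: "0 \<le> D" unfolding D_def by simp
  have Q0: "0 \<le> Q" unfolding Q_def by simp
  have main: "\<bar>\<integral>\<omega>. h (X \<omega>) * g (sigmoid (FT (X \<omega>))) * (Y \<omega> - sigmoid (FT (X \<omega>))) \<partial>M\<bar>
      \<le> 2 / sqrt 3 * sqrt S * sqrt A * sqrt (\<integral>\<omega>. h (X \<omega>) * sigmoid (FT (X \<omega>)) * (1 - sigmoid (FT (X \<omega>))) \<partial>M)"
    if hH: "h \<in> H" and gG: "g \<in> interval_fns" for h g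
  proof -
    obtain I where I: "I \<subseteq> {0..1}" "is_interval I" "g = indicator I"
      using gG unfolding interval_fns_def by auto
    have Ib[measurable]: "I \<in> sets borel" using I(2) by (rule real_interval_borel_measurable)
    have hm[measurable]: "h \<in> borel_measurable N" using H hH by auto
    have h01: "\<And>x. h x \<in> {0,1}" using H hH by auto
    have h0: "0 \<le> h x" for x using h01[of x] by auto
    define fx where "fx = (\<lambda>\<omega>. sigmoid (FT (X \<omega>)))"
    have fxm[measurable]: "fx \<in> borel_measurable M" unfolding fx_def by measurable
    have fx01: "0 < fx \<omega>" "fx \<omega> < 1" for \<omega> unfolding fx_def using sigmoid_pos by auto
    define u where "u = (\<lambda>\<omega>. h (X \<omega>) * g (fx \<omega>))"
    have um[measurable]: "u \<in> borel_measurable M" unfolding u_def I(3) by measurable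
    have u01: "u \<omega> \<in> {0,1}" for \<omega> unfolding u_def I(3) using h01[of "X \<omega>"] by (auto simp: indicator_def)
    define \<beta> where "\<beta> = (\<integral>\<omega>. u \<omega> * (Y \<omega> - fx \<omega>) \<partial>M)"
    define p where "p = (\<integral>\<omega>. u \<omega> \<partial>M)"
    define v where "v = (\<integral>\<omega>. h (X \<omega>) * fx \<omega> * (1 - fx \<omega>) \<partial>M)"
    have uab: "\<bar>u \<omega>\<bar> \<le> 1" for \<omega> using u01[of \<omega>] by auto
    have intu: "integrable M u"
      by (rule P.integrable_const_bound[where B=1]) (use uab in \<open>auto intro!: AE_I2\<close>)
    have uY: "\<bar>u \<omega> * (Y \<omega> - fx \<omega>)\<bar> \<le> u \<omega>" if "\<omega> \<in> space M" for \<omega>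
    proof -
      have "\<bar>Y \<omega> - fx \<omega>\<bar> \<le> 1" using Y(2) that fx01[of \<omega>] by auto
      then show ?thesis using u01[of \<omega>] by auto
    qed
    have uY1: "\<bar>u \<omega> * (Y \<omega> - fx \<omega>)\<bar> \<le> 1" if "\<omega> \<in> space M" for \<omega>
      using uY[OF that] uab[of \<omega>] by linarith
    have intuY: "integrable M (\<lambda>\<omega>. u \<omega> * (Y \<omega> - fx \<omega>))"
      by (rule P.integrable_const_bound[where B=1]) (use uY1 in \<open>auto intro!: AE_I2\<close>)
    have inthf: "integrable M (\<lambda>\<omega>. h (X \<omega>) * fx \<omega> * (1 - fx \<omega>))"
    proof (rule P.integrable_const_bound[where B=1])
      show "AE \<omega> in M. norm (h (X \<omega>) * fx \<omega> * (1 - fx \<omega>)) \<le> 1"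
      proof (rule AE_I2)
        fix \<omega>
        have "0 \<le> fx \<omega> * (1 - fx \<omega>)" "fx \<omega> * (1 - fx \<omega>) \<le> 1"
          using fx01[of \<omega>] by (auto intro: mult_nonneg_nonneg mult_le_one)
        then show "norm (h (X \<omega>) * fx \<omega> * (1 - fx \<omega>)) \<le> 1"
          using h01[of "X \<omega>"] by (auto simp: mult.assoc)
      qed
    qed measurable
    have u0: "0 \<le> u \<omega>" for \<omega> using u01[of \<omega>] by auto
    have p0: "0 \<le> p" unfolding p_def by (rule Bochner_Integration.integral_nonneg) (rule u0)
    have wb: "Ls \<le> L0 - c * \<beta> + c\<^sup>2 / 8 * p" for c
    proof -
      define R where "R = (\<lambda>\<omega>. logloss (FT (X \<omega>)) (Y \<omega>) - c * (u \<omega> * (Y \<omega> - fx \<omega>)) + c\<^sup>2 / 8 * u \<omega>)"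
      have Rge: "logloss (FT (X \<omega>) + c * u \<omega>) (Y \<omega>) \<le> R \<omega>" if "\<omega> \<in> space M" for \<omega>
      proof -
        have "logloss (FT (X \<omega>) + c * u \<omega>) (Y \<omega>) \<le> logloss (FT (X \<omega>)) (Y \<omega>) - (c * u \<omega>) * (Y \<omega> - sigmoid (FT (X \<omega>))) + (c * u \<omega>)\<^sup>2 / 8"
          by (rule logloss_quad) (use Y(2) that in auto)
        moreover have "(c * u \<omega>)\<^sup>2 / 8 = c\<^sup>2 / 8 * u \<omega>" using u01[of \<omega>] by (auto simp: power2_eq_square)
        moreover have "c * (u \<omega> * (Y \<omega> - fx \<omega>)) = (c * u \<omega>) * (Y \<omega> - sigmoid (FT (X \<omega>)))"
          by (simp add: fx_def)
        ultimately show ?thesis unfolding R_def by linarith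
      qed
      have Rnn: "0 \<le> R \<omega>" if "\<omega> \<in> space M" for \<omega>
        using Rge[OF that] logloss_nonneg[of "Y \<omega>" "FT (X \<omega>) + c * u \<omega>"] Y(2) that by auto
      have intR: "integrable M R" unfolding R_def using int0 intu intuY by auto
      have intRv: "integral\<^sup>L M R = L0 - c * \<beta> + c\<^sup>2 / 8 * p"
        unfolding R_def L0eq \<beta>_def p_def using int0 intu intuY by simp
      have mem: "exp_loss M (\<lambda>\<omega>. FT (X \<omega>) + c * u \<omega>) Y \<in> {exp_loss M (\<lambda>\<omega>. FT (X \<omega>) + (\<Sum>k<K. w k * \<phi> k (X \<omega>) (sigmoid (FT (X \<omega>))))) Y
          | (K::nat) (w::nat \<Rightarrow> real) \<phi>. \<forall>k<K. \<phi> k \<in> W}"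
        apply (rule CollectI)
        apply (rule exI[of _ "1::nat"], rule exI[of _ "\<lambda>_. c"], rule exI[of _ "\<lambda>_. \<lambda>x v. h x * g v"])
        using W hH gG by (auto simp: u_def fx_def)
      have "opt_loss M X Y FT W \<le> exp_loss M (\<lambda>\<omega>. FT (X \<omega>) + c * u \<omega>) Y"
        unfolding opt_loss_def by (rule Inf_lower[OF mem])
      also have "\<dots> \<le> (\<integral>\<^sup>+\<omega>. ennreal (R \<omega>) \<partial>M)"
        unfolding exp_loss_def by (rule nn_integral_mono) (use Rge in \<open>auto intro: ennreal_leI\<close>)
      also have "\<dots> = ennreal (integral\<^sup>L M R)"
        by (rule nn_integral_eq_integral[OF intR]) (use Rnn in \<open>auto intro: AE_I2\<close>)
      finally have "opt_loss M X Y FT W \<le> ennreal (integral\<^sup>L M R)" .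
      then have "Ls \<le> enn2real (ennreal (integral\<^sup>L M R))"
        unfolding Ls_def by (rule enn2real_mono) simp
      also have "\<dots> = integral\<^sup>L M R" using Rnn by (simp add: Bochner_Integration.integral_nonneg)
      finally show ?thesis unfolding intRv .
    qed
    have LsL0: "Ls \<le> L0" using wb[of 0] by simp
    have bp: "\<beta> \<le> p"
      unfolding \<beta>_def p_def by (rule integral_mono[OF intuY intu]) (use uY in \<open>auto simp: abs_le_iff\<close>)
    have bm: "- p \<le> \<beta>"
    proof -
      have "(\<integral>\<omega>. - u \<omega> \<partial>M) \<le> \<beta>"
        unfolding \<beta>_def by (rule integral_mono) (use intu intuY in auto, use uY in \<open>fastforce simp: abs_le_iff\<close>)
      then show ?thesis unfolding p_def by simp
    qed
    have b2: "\<beta>\<^sup>2 \<le> p * (L0 - Ls) / 2"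
    proof (cases "p = 0")
      case True
      then have "\<beta> = 0" using bp bm by simp
      then show ?thesis using True by simp
    next
      case False
      then have pp: "0 < p" using p0 by simp
      have "Ls \<le> L0 - (4 * \<beta> / p) * \<beta> + (4 * \<beta> / p)\<^sup>2 / 8 * p" by (rule wb)
      also have "(4 * \<beta> / p) * \<beta> = 4 * \<beta>\<^sup>2 / p" by (simp add: power2_eq_square)
      also have "(4 * \<beta> / p)\<^sup>2 / 8 * p = 2 * \<beta>\<^sup>2 / p" using pp by (simp add: power2_eq_square field_simps)
      finally have "Ls \<le> L0 - 2 * \<beta>\<^sup>2 / p" by simp
      then have "2 * \<beta>\<^sup>2 / p \<le> L0 - Ls" by simp
      then have "2 * \<beta>\<^sup>2 \<le> p * (L0 - Ls)" using pp by (simp add: field_simps)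
      then show ?thesis by simp
    qed
    have AL: "L0 - Ls \<le> A" unfolding A_def using L01 D0 Q0 by simp
    have A0: "0 \<le> A" using AL LsL0 by simp
    have b2A: "\<beta>\<^sup>2 \<le> p * A / 2"
      using b2 mult_left_mono[OF AL p0] by simp
    have v0: "0 \<le> v" unfolding v_def using h0 fx01
      by (intro Bochner_Integration.integral_nonneg) (auto intro!: mult_nonneg_nonneg simp: less_imp_le)
    have gx: "g (sigmoid (FT (X \<omega>))) = g (fx \<omega>)" for \<omega> by (simp add: fx_def)
    have lhs: "(\<integral>\<omega>. h (X \<omega>) * g (sigmoid (FT (X \<omega>))) * (Y \<omega> - sigmoid (FT (X \<omega>))) \<partial>M) = \<beta>"
      unfolding \<beta>_def u_def fx_def by simp
    have rhs: "(\<integral>\<omega>. h (X \<omega>) * sigmoid (FT (X \<omega>)) * (1 - sigmoid (FT (X \<omega>))) \<partial>M) = v"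
      unfolding v_def fx_def by simp
    have "\<bar>\<beta>\<bar> \<le> 2 / sqrt 3 * sqrt S * sqrt A * sqrt v"
    proof (cases "v = 0")
      case True
      have "AE \<omega> in M. h (X \<omega>) * fx \<omega> * (1 - fx \<omega>) = 0"
        using True unfolding v_def
        by (subst integral_nonneg_eq_0_iff_AE[OF inthf, symmetric])
           (use h0 fx01 in \<open>auto intro!: AE_I2 mult_nonneg_nonneg simp: less_imp_le\<close>)
      then have "AE \<omega> in M. u \<omega> * (Y \<omega> - fx \<omega>) = 0"
      proof (rule AE_mp, intro AE_I2 impI)
        fix \<omega> assume "h (X \<omega>) * fx \<omega> * (1 - fx \<omega>) = 0"
        then have "h (X \<omega>) = 0" using fx01[of \<omega>] by auto
        then show "u \<omega> * (Y \<omega> - fx \<omega>) = 0" by (simp add: u_def)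
      qed
      then have "\<beta> = 0" unfolding \<beta>_def by (rule integral_eq_zero_AE)
      then show ?thesis using True by simp
    next
      case False
      then have vp: "0 < v" using v0 by simp
      define E where "E = {\<omega> \<in> space M. h (X \<omega>) = 1}"
      have Es: "E \<in> sets M" unfolding E_def by measurable
      have indE: "indicator E \<omega> = h (X \<omega>)" if "\<omega> \<in> space M" for \<omega>
        using h01[of "X \<omega>"] that by (auto simp: E_def indicator_def)
      have c1: "(\<integral>\<omega>. g ((sigmoid \<circ> FT) (X \<omega>)) * indicator E \<omega> \<partial>M) = p"
        unfolding p_def u_def by (rule Bochner_Integration.integral_cong) (auto simp: indE fx_def)
      have c2: "(\<integral>\<omega>. (sigmoid \<circ> FT) (X \<omega>) * (1 - (sigmoid \<circ> FT) (X \<omega>)) * indicator E \<omega> \<partial>M) = v"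
        unfolding v_def by (rule Bochner_Integration.integral_cong) (auto simp: indE fx_def)
      have "v \<le> (\<integral>\<omega>. indicator E \<omega> \<partial>M)"
        unfolding v_def
      proof (rule integral_mono[OF inthf])
        show "integrable M (indicator E :: 'w \<Rightarrow> real)" using Es by (intro integrable_real_indicator) (auto simp: P.emeasure_eq_measure)
        fix \<omega> assume "\<omega> \<in> space M"
        have "fx \<omega> * (1 - fx \<omega>) \<le> 1"
          using fx01[of \<omega>] by (auto intro: mult_le_one)
        then show "h (X \<omega>) * fx \<omega> * (1 - fx \<omega>) \<le> indicator E \<omega>"
          using h01[of "X \<omega>"] indE[OF \<open>\<omega> \<in> space M\<close>] by (auto simp: mult.assoc)
      qed
      also have "\<dots> = measure M E" using Es by simp
      finally have PE: "0 < measure M E" using vp by simp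
      define r where "r = cond_exp_event M (\<lambda>\<omega>. g ((sigmoid \<circ> FT) (X \<omega>))) {\<omega>\<in>space M. h (X \<omega>) = 1}
          / cond_exp_event M (\<lambda>\<omega>. (sigmoid \<circ> FT) (X \<omega>) * (1 - (sigmoid \<circ> FT) (X \<omega>))) {\<omega>\<in>space M. h (X \<omega>) = 1}"
      have rmem: "r \<in> CT_ratios M X H (sigmoid \<circ> FT)"
        unfolding CT_ratios_def r_def using hH gG by blast
      have req: "r = p / v"
        unfolding r_def cond_exp_event_def E_def[symmetric] c1 c2 using PE by simp
      have "p / v \<le> S" unfolding S_def using cSup_upper[OF rmem bdd] req by simp
      then have pS: "p \<le> S * v" using vp by (simp add: field_simps)
      have S0: "0 \<le> S" using \<open>p / v \<le> S\<close> p0 vp by (smt (verit) divide_nonneg_pos)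
      have "\<beta>\<^sup>2 \<le> p * A / 2" by (rule b2A)
      also have "\<dots> \<le> S * v * A / 2" using mult_right_mono[OF pS A0] by simp
      also have "\<dots> \<le> 4 / 3 * S * A * v" using S0 A0 v0 by (simp add: mult_nonneg_nonneg)
      finally have "sqrt (\<beta>\<^sup>2) \<le> sqrt (4 / 3 * S * A * v)" by (rule real_sqrt_le_mono)
      also have "sqrt (4 / 3 * S * A * v) = sqrt (4 / 3) * sqrt S * sqrt A * sqrt v"
        by (simp only: real_sqrt_mult)
      also have "sqrt (4 / 3) = 2 / sqrt 3"
        by (simp add: real_sqrt_divide)
      finally show ?thesis by simp
    qed
    then show ?thesis using lhs rhs by simp
  qed
  show ?thesis
    unfolding Let_def multicalibrated_def
    using main unfolding S_def A_def D_def Q_def L1_def Ls_def o_def by simp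
qed

end
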